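(* For every binary cellular automaton $C=(\{0,1\},\delta)$ with blank symbol $1$ there exist an integer $N$ and a $(2N+2)$-dimensional subtraction game $\mathcal{D}_C$ (finite difference set in $\mathbb{Z}^{2N+2}$ with all vectors of positive coordinate sum) such that $c(t,u)=p(Nt+u,\,Nt-u,\,0,0,\dots,0,1)$ for all integers $t\ge0$ and $u$ with $|u|\le Nt$, where $c(t,u)$ is the content of cell $u$ at time $t$ of $C$ started from the configuration with $c(0,u)=0$ iff $u=0$, and $p(\cdot)$ is the value of a position of $\mathcal{D}_C$.
   Context: Binary cellular automaton with neighborhood size $r$: configurations $c:\mathbb{Z}\to\{0,1\}$, one step maps $c$ to $c'$ with $c'(u)=\delta(c(u-r),\dots,c(u+r))$ for $\delta:\{0,1\}^{2r+1}\to\{0,1\}$; blank symbol $1$ means $\delta(1,\dots,1)=1$. Subtraction game with finite difference set $D\subset\mathbb{Z}^d$: positions $x\in\mathbb{Z}_{\ge0}^d$, move from $x$ to $y\in\mathbb{Z}_{\ge0}^d$ iff $x-y\in D$; normal play. The value of a position is $0$ for a P-position (player to move has no winning strategy) and $1$ for an N-position. *)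

theory Defs
  imports Main
begin

text \<open>Binary cellular automaton with neighbourhood radius r. Symbols 0/1 are
  represented by False/True. A local rule delta is applied to the list
  [c(u-r), ..., c(u+r)].\<close>

definition ca_step :: "nat \<Rightarrow> (bool list \<Rightarrow> bool) \<Rightarrow> (int \<Rightarrow> bool) \<Rightarrow> (int \<Rightarrow> bool)" where
  "ca_step r \<delta> c = (\<lambda>u. \<delta> (map (\<lambda>i. c (u + i)) [- int r..int r]))"

definition ca_config :: "nat \<Rightarrow> (bool list \<Rightarrow> bool) \<Rightarrow> nat \<Rightarrow> int \<Rightarrow> bool" where
  "ca_config r \<delta> t = (ca_step r \<delta> ^^ t) (\<lambda>u. u \<noteq> 0)"

definition vsub :: "int list \<Rightarrow> int list \<Rightarrow> int list" where
  "vsub x d = map2 (-) x d"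

text \<open>The extra guard 0 < sum_list d is automatic for the games considered
  (all difference vectors have positive coordinate sum) and only serves
  to make the recursion well-founded.\<close>
definition legal_move :: "int list set \<Rightarrow> int list \<Rightarrow> int list \<Rightarrow> bool" where
  "legal_move D x d \<longleftrightarrow> d \<in> D \<and> length d = length x \<and> 0 < sum_list d \<and>
      (\<forall>i\<in>set (vsub x d). 0 \<le> i)"

lemma sum_list_vsub:
  "length d = length x \<Longrightarrow> sum_list (vsub x d) = sum_list x - sum_list d"
  unfolding vsub_def
  by (induction x d rule: list_induct2') (auto)

lemma legal_move_dec:
  assumes "legal_move D x d"
  shows "nat (sum_list (vsub x d)) < nat (sum_list x)"
proof -
  have l: "length d = length x" and p: "0 < sum_list d"
    and nn: "\<forall>i\<in>set (vsub x d). 0 \<le> i"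
    using assms unfolding legal_move_def by auto
  have "0 \<le> sum_list (vsub x d)" using nn by (simp add: sum_list_nonneg)
  moreover have "sum_list (vsub x d) = sum_list x - sum_list d"
    using l by (rule sum_list_vsub)
  ultimately show ?thesis using p by simp
qed

function game_value :: "int list set \<Rightarrow> int list \<Rightarrow> nat" where
  "game_value D x =
     (if \<exists>d. (if legal_move D x d then game_value D (vsub x d) = 0 else False)
      then 1 else 0)"
  by pat_completeness auto
termination
  by (relation "measure (\<lambda>(D, x). nat (sum_list x))")
     (auto dest!: legal_move_dec)

declare game_value.simps [simp del]

lemma game_value_eq:
  "game_value D x =
     (if \<exists>d. legal_move D x d \<and> game_value D (vsub x d) = 0 then 1 else 0)"
  by (subst game_value.simps) (smt (verit))

end

theory Submission imports Defs "HOL-Library.Countable" begin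

definition vec :: "nat \<Rightarrow> int \<Rightarrow> int \<Rightarrow> (nat \<Rightarrow> int) \<Rightarrow> int \<Rightarrow> int list" where
  "vec L a b f l = [a,b] @ map f [0..<L] @ [l]"

lemma length_vec[simp]: "length (vec L a b f l) = L + 3"
  by (simp add: vec_def)

lemma vsub_vec[simp]: "vsub (vec L a b f l) (vec L a' b' f' l') = vec L (a-a') (b-b') (\<lambda>j. f j - f' j) (l - l')"
  by (simp add: vec_def vsub_def zip_map_map zip_same_conv_map)

lemma nonneg_vec[simp]: "(\<forall>i\<in>set (vec L a b f l). 0 \<le> i) \<longleftrightarrow> 0 \<le> a \<and> 0 \<le> b \<and> (\<forall>j<L. 0 \<le> f j) \<and> 0 \<le> l"
  by (auto simp: vec_def)

lemma sum_vec: "sum_list (vec L a b f l) = a + b + sum f {0..<L} + l"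
  by (simp add: vec_def sum_set_upt_conv_sum_list_nat[symmetric])

definition e :: "nat \<Rightarrow> nat \<Rightarrow> int" where "e g = (\<lambda>j. if j = g then 1 else 0)"

lemma sum_e: "g < L \<Longrightarrow> sum (e g) {0..<L} = 1"
  by (simp add: e_def)

lemma vec_cong: "a = a' \<Longrightarrow> b = b' \<Longrightarrow> (\<And>j. j < L \<Longrightarrow> f j = f' j) \<Longrightarrow> l = l' \<Longrightarrow> vec L a b f l = vec L a' b' f' l'"
  by (simp add: vec_def)


lemma e_same[simp]: "e g g = 1" and e_diff[simp]: "j \<noteq> g \<Longrightarrow> e g j = 0"
  by (auto simp: e_def)

lemma e_nonneg[simp]: "0 \<le> e g j" by (simp add: e_def)

definition K :: "nat \<Rightarrow> nat" where
  "K r = Suc (Max (to_nat ` {s::bool list. length s = 2*r+1}))"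
definition NN :: "nat \<Rightarrow> nat" where "NN r = K r + 2*r + 3"
definition LL :: "nat \<Rightarrow> nat" where "LL r = 2 * NN r - 1"
definition gi :: "bool list \<Rightarrow> bool \<Rightarrow> nat" where "gi s c = 2 * to_nat s + of_bool c"
definition ni :: "nat \<Rightarrow> nat \<Rightarrow> bool \<Rightarrow> nat" where "ni r i c = 2 * K r + 2 * i + of_bool c"
definition al :: "bool \<Rightarrow> int" where "al c = (if c then 0 else 2)"
definition be :: "bool \<Rightarrow> int" where "be c = (if c then 2 else 0)"
definition off :: "nat \<Rightarrow> nat \<Rightarrow> int" where "off r i = int i - int r"

definition cellp where "cellp r a b = vec (LL r) a b (\<lambda>_. 0) 1"
definition gatep where "gatep r g a b = vec (LL r) a b (\<lambda>j. 2 * e g j) 0"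
definition negp where "negp r k a b = vec (LL r) a b (e k) 0"

definition T1 where "T1 r \<delta> = (\<lambda>(s,c). vec (LL r) (al c) (be c) (\<lambda>j. - 2 * e (gi s c) j) 1) `
   ({s. length s = 2*r+1 \<and> \<delta> s} \<times> UNIV)"
definition T2 where "T2 r = (\<lambda>(s,c,i). vec (LL r) (int (NN r) - off r i - al c) (int (NN r) + off r i - be c)
    (\<lambda>j. 2 * e (gi s c) j) (-1)) ` {(s,c,i). length s = 2*r+1 \<and> i < 2*r+1 \<and> s!i}"
definition T3 where "T3 r = (\<lambda>(s,c,i). vec (LL r) 0 0 (\<lambda>j. 2 * e (gi s c) j - e (ni r i c) j) 0)
    ` {(s,c,i). length s = 2*r+1 \<and> i < 2*r+1 \<and> \<not> s!i}"
definition T4 where "T4 r = (\<lambda>(c,i). vec (LL r) (int (NN r) - off r i - al c) (int (NN r) + off r i - be c)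
    (e (ni r i c)) (-1)) ` (UNIV \<times> {..<2*r+1})"
definition DD where "DD r \<delta> = T1 r \<delta> \<union> T2 r \<union> T3 r \<union> T4 r"

lemma finite_lists: "finite {s::bool list. length s = m}"
  using finite_lists_length_eq[where A="UNIV :: bool set" and n=m] by simp

lemma finite_DD: "finite (DD r \<delta>)"
proof -
  have f: "finite ({s::bool list. length s = 2*r+1} \<times> (UNIV::bool set) \<times> {..<2*r+1})"
    using finite_lists by auto
  have "finite (T1 r \<delta>)" unfolding T1_def
    by (rule finite_imageI, rule finite_cartesian_product) (auto intro: finite_subset[OF _ finite_lists])
  moreover have "finite (T2 r)" unfolding T2_def
    by (rule finite_imageI, rule finite_subset[OF _ f]) auto
  moreover have "finite (T3 r)" unfolding T3_def
    by (rule finite_imageI, rule finite_subset[OF _ f]) auto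
  moreover have "finite (T4 r)" unfolding T4_def by auto
  ultimately show ?thesis by (simp add: DD_def)
qed

lemma to_nat_lt: "length (s::bool list) = 2*r+1 \<Longrightarrow> to_nat s < K r"
proof -
  assume "length s = 2*r+1"
  then have "to_nat s \<le> Max (to_nat ` {s::bool list. length s = 2*r+1})"
    by (intro Max_ge finite_imageI finite_lists) (auto intro: rev_image_eqI)
  then show ?thesis by (simp add: K_def)
qed

lemma gi_lt: "length s = 2*r+1 \<Longrightarrow> gi s c < 2 * K r"
  using to_nat_lt[of s r] by (simp add: gi_def)

lemma gi_lt_L: "length s = 2*r+1 \<Longrightarrow> gi s c < LL r"
  using gi_lt[of s r c] by (simp add: LL_def NN_def)

lemma ni_lt_L: "i < 2*r+1 \<Longrightarrow> ni r i c < LL r"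
  by (simp add: ni_def LL_def NN_def)

lemma gi_ne_ni[simp]: "length s = 2*r+1 \<Longrightarrow> gi s c \<noteq> ni r i c'"
  using gi_lt[of s r c] by (simp add: ni_def)

lemma ni_ne_gi[simp]: "length s = 2*r+1 \<Longrightarrow> ni r i c' \<noteq> gi s c"
  using gi_ne_ni[of s r c i c'] by metis

lemma gi_inj: "gi s c = gi s' c' \<longleftrightarrow> s = s' \<and> c = c'"
  by (auto simp: gi_def of_bool_def split: if_splits; presburger)

lemma ni_inj: "ni r i c = ni r i' c' \<longleftrightarrow> i = i' \<and> c = c'"
  by (auto simp: ni_def of_bool_def split: if_splits; presburger)

lemma NN_ge: "int r + 2 \<le> int (NN r)" by (simp add: NN_def)

lemma sum_ce: "g < L \<Longrightarrow> (\<Sum>j = 0..<L. c * e g j) = c"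
proof -
  assume "g < L"
  have "(\<Sum>j = 0..<L. c * e g j) = (\<Sum>j = 0..<L. if j = g then c else 0)"
    by (rule sum.cong) (auto simp: e_def)
  also have "\<dots> = c" using \<open>g < L\<close> by simp
  finally show ?thesis .
qed

lemma sum_ce2: "g < L \<Longrightarrow> k < L \<Longrightarrow> (\<Sum>j = 0..<L. c * e g j - e k j) = c - 1"
  by (simp add: sum_subtractf sum_ce sum_e)

lemma sum_pos: "d \<in> DD r \<delta> \<Longrightarrow> 0 < sum_list d"
  using NN_ge[of r]
  by (auto simp: DD_def T1_def T2_def T3_def T4_def sum_vec sum_e gi_lt_L ni_lt_L
      sum_ce sum_ce2[where c=2, simplified] sum_ce[where c="-2", simplified] al_def be_def off_def)


lemma nn_mid: "\<forall>i\<in>set (vec L a b f l). 0 \<le> i \<Longrightarrow> j < L \<Longrightarrow> 0 \<le> f j"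
  by simp

lemma length_DD: "d \<in> DD r \<delta> \<Longrightarrow> length d = LL r + 3"
  by (auto simp: DD_def T1_def T2_def T3_def T4_def)

lemma legal_vec: "legal_move (DD r \<delta>) (vec (LL r) a b f l) d \<longleftrightarrow>
   d \<in> DD r \<delta> \<and> (\<forall>i\<in>set (vsub (vec (LL r) a b f l) d). 0 \<le> i)"
  by (auto simp: legal_move_def sum_pos length_DD)

lemma DD_cases:
  assumes "d \<in> DD r \<delta>"
  obtains (t1) s c where "length s = 2*r+1" "\<delta> s" "d = vec (LL r) (al c) (be c) (\<lambda>j. - 2 * e (gi s c) j) 1"
  | (t2) s c i where "length s = 2*r+1" "i < 2*r+1" "s!i"
       "d = vec (LL r) (int (NN r) - off r i - al c) (int (NN r) + off r i - be c) (\<lambda>j. 2 * e (gi s c) j) (-1)"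
  | (t3) s c i where "length s = 2*r+1" "i < 2*r+1" "\<not> s!i"
       "d = vec (LL r) 0 0 (\<lambda>j. 2 * e (gi s c) j - e (ni r i c) j) 0"
  | (t4) c i where "i < 2*r+1"
       "d = vec (LL r) (int (NN r) - off r i - al c) (int (NN r) + off r i - be c) (e (ni r i c)) (-1)"
  using assms unfolding DD_def T1_def T2_def T3_def T4_def by auto

lemma cell_val:
  assumes "0 \<le> A" "0 \<le> B"
  shows "game_value (DD r \<delta>) (cellp r A B) = (if \<exists>s c. length s = 2*r+1 \<and> \<delta> s \<and> al c \<le> A \<and> be c \<le> B \<and>
     game_value (DD r \<delta>) (gatep r (gi s c) (A - al c) (B - be c)) = 0 then 1 else 0)"
proof -
  let ?G = "game_value (DD r \<delta>)"
  have "(\<exists>d. legal_move (DD r \<delta>) (cellp r A B) d \<and> ?G (vsub (cellp r A B) d) = 0) \<longleftrightarrow>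
    (\<exists>s c. length s = 2*r+1 \<and> \<delta> s \<and> al c \<le> A \<and> be c \<le> B \<and>
     ?G (gatep r (gi s c) (A - al c) (B - be c)) = 0)" (is "?L \<longleftrightarrow> ?R")
  proof
    assume ?L
    then obtain d where dD: "d \<in> DD r \<delta>" and nn: "\<forall>i\<in>set (vsub (cellp r A B) d). 0 \<le> i"
      and g0: "?G (vsub (cellp r A B) d) = 0"
      by (auto simp: cellp_def legal_vec)
    from dD show ?R
    proof (cases rule: DD_cases)
      case (t1 s c)
      have "vsub (cellp r A B) d = gatep r (gi s c) (A - al c) (B - be c)"
        using t1 by (simp add: cellp_def gatep_def)
      with t1 nn g0 show ?thesis by (auto simp: cellp_def)
    next
      case (t2 s c i)
      show ?thesis using nn_mid[OF nn[unfolded t2(4) cellp_def vsub_vec] gi_lt_L[of s r c, OF t2(1)]] by simp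
    next
      case (t3 s c i)
      show ?thesis using nn_mid[OF nn[unfolded t3(4) cellp_def vsub_vec] gi_lt_L[of s r c, OF t3(1)]] t3 by simp
    next
      case (t4 c i)
      show ?thesis using nn_mid[OF nn[unfolded t4(2) cellp_def vsub_vec] ni_lt_L[of i r c, OF t4(1)]] by simp
    qed
  next
    assume ?R
    then obtain s c where s: "length s = 2*r+1" "\<delta> s" "al c \<le> A" "be c \<le> B"
      and g0: "?G (gatep r (gi s c) (A - al c) (B - be c)) = 0" by blast
    define d where "d = vec (LL r) (al c) (be c) (\<lambda>j. - 2 * e (gi s c) j) 1"
    have dD: "d \<in> DD r \<delta>" using s by (auto simp: d_def DD_def T1_def)
    have v: "vsub (cellp r A B) d = gatep r (gi s c) (A - al c) (B - be c)"
      by (simp add: cellp_def gatep_def d_def)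
    show ?L
      by (rule exI[of _ d]) (use dD v g0 s in \<open>auto simp: legal_vec cellp_def gatep_def\<close>)
  qed
  then show ?thesis by (subst game_value_eq) simp
qed


definition X where "X r i c A = A - (int (NN r) - off r i - al c)"
definition Y where "Y r i c B = B - (int (NN r) + off r i - be c)"

lemma neg_val:
  assumes "i < 2*r+1" "0 \<le> A" "0 \<le> B"
  shows "game_value (DD r \<delta>) (negp r (ni r i c) A B) = (if 0 \<le> X r i c A \<and> 0 \<le> Y r i c B \<and>
     game_value (DD r \<delta>) (cellp r (X r i c A) (Y r i c B)) = 0 then 1 else 0)"
proof -
  let ?G = "game_value (DD r \<delta>)"
  let ?x = "negp r (ni r i c) A B"
  have "(\<exists>d. legal_move (DD r \<delta>) ?x d \<and> ?G (vsub ?x d) = 0) \<longleftrightarrow>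
    (0 \<le> X r i c A \<and> 0 \<le> Y r i c B \<and> ?G (cellp r (X r i c A) (Y r i c B)) = 0)" (is "?L \<longleftrightarrow> ?R")
  proof
    assume ?L
    then obtain d where dD: "d \<in> DD r \<delta>" and nn: "\<forall>i\<in>set (vsub ?x d). 0 \<le> i"
      and g0: "?G (vsub ?x d) = 0"
      by (auto simp: negp_def legal_vec)
    from dD show ?R
    proof (cases rule: DD_cases)
      case (t1 s c')
      then show ?thesis using nn by (simp add: negp_def)
    next
      case (t2 s c' i')
      show ?thesis using nn_mid[OF nn[unfolded t2(4) negp_def vsub_vec] gi_lt_L[of s r c', OF t2(1)]] t2 by simp
    next
      case (t3 s c' i')
      show ?thesis using nn_mid[OF nn[unfolded t3(4) negp_def vsub_vec] gi_lt_L[of s r c', OF t3(1)]] t3 by simp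
    next
      case (t4 c' i')
      have "ni r i' c' = ni r i c"
      proof (rule ccontr)
        assume "ni r i' c' \<noteq> ni r i c"
        then show False
          using nn_mid[OF nn[unfolded t4(2) negp_def vsub_vec] ni_lt_L[of i' r c', OF t4(1)]] by simp
      qed
      then have ic: "i' = i" "c' = c" by (auto simp: ni_inj)
      have "vsub ?x d = cellp r (X r i c A) (Y r i c B)"
        using t4 ic by (simp add: negp_def cellp_def X_def Y_def)
      with nn g0 show ?thesis by (simp add: cellp_def)
    qed
  next
    assume R: ?R
    define d where "d = vec (LL r) (int (NN r) - off r i - al c) (int (NN r) + off r i - be c) (e (ni r i c)) (-1)"
    have dD: "d \<in> DD r \<delta>" using assms by (auto simp: d_def DD_def T4_def)
    have v: "vsub ?x d = cellp r (X r i c A) (Y r i c B)"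
      by (simp add: negp_def cellp_def d_def X_def Y_def)
    show ?L
      by (rule exI[of _ d]) (use dD v R in \<open>auto simp: legal_vec negp_def cellp_def\<close>)
  qed
  then show ?thesis by (subst game_value_eq) simp
qed

lemma gate_val:
  assumes "length s = 2*r+1" "0 \<le> A" "0 \<le> B"
  shows "game_value (DD r \<delta>) (gatep r (gi s c) A B) = (if \<exists>i<2*r+1.
     (s!i \<and> 0 \<le> X r i c A \<and> 0 \<le> Y r i c B \<and> game_value (DD r \<delta>) (cellp r (X r i c A) (Y r i c B)) = 0)
   \<or> (\<not> s!i \<and> game_value (DD r \<delta>) (negp r (ni r i c) A B) = 0) then 1 else 0)"
proof -
  let ?G = "game_value (DD r \<delta>)"
  let ?x = "gatep r (gi s c) A B"
  have "(\<exists>d. legal_move (DD r \<delta>) ?x d \<and> ?G (vsub ?x d) = 0) \<longleftrightarrow>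
    (\<exists>i<2*r+1. (s!i \<and> 0 \<le> X r i c A \<and> 0 \<le> Y r i c B \<and> ?G (cellp r (X r i c A) (Y r i c B)) = 0)
   \<or> (\<not> s!i \<and> ?G (negp r (ni r i c) A B) = 0))" (is "?L \<longleftrightarrow> ?R")
  proof
    assume ?L
    then obtain d where dD: "d \<in> DD r \<delta>" and nn: "\<forall>i\<in>set (vsub ?x d). 0 \<le> i"
      and g0: "?G (vsub ?x d) = 0"
      by (auto simp: gatep_def legal_vec)
    from dD show ?R
    proof (cases rule: DD_cases)
      case (t1 s' c')
      then show ?thesis using nn by (simp add: gatep_def)
    next
      case (t2 s' c' i')
      have "gi s' c' = gi s c"
      proof (rule ccontr)
        assume "gi s' c' \<noteq> gi s c"
        then show False
          using nn_mid[OF nn[unfolded t2(4) gatep_def vsub_vec] gi_lt_L[of s' r c', OF t2(1)]] by simp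
      qed
      then have sc: "s' = s" "c' = c" by (auto simp: gi_inj)
      have "vsub ?x d = cellp r (X r i' c A) (Y r i' c B)"
        using t2 sc by (simp add: gatep_def cellp_def X_def Y_def)
      with nn g0 t2 sc show ?thesis by (auto simp: cellp_def)
    next
      case (t3 s' c' i')
      have "gi s' c' = gi s c"
      proof (rule ccontr)
        assume "gi s' c' \<noteq> gi s c"
        then show False
          using nn_mid[OF nn[unfolded t3(4) gatep_def vsub_vec] gi_lt_L[of s' r c', OF t3(1)]] t3 by simp
      qed
      then have sc: "s' = s" "c' = c" by (auto simp: gi_inj)
      have "vsub ?x d = negp r (ni r i' c) A B"
        using t3 sc by (simp add: gatep_def negp_def)
      with nn g0 t3 sc show ?thesis by (auto simp: negp_def)
    next
      case (t4 c' i')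
      show ?thesis using nn_mid[OF nn[unfolded t4(2) gatep_def vsub_vec] ni_lt_L[of i' r c', OF t4(1)]]
          assms(1) by simp
    qed
  next
    assume ?R
    then obtain i where i: "i < 2*r+1" and R: "(s!i \<and> 0 \<le> X r i c A \<and> 0 \<le> Y r i c B \<and> ?G (cellp r (X r i c A) (Y r i c B)) = 0)
   \<or> (\<not> s!i \<and> ?G (negp r (ni r i c) A B) = 0)" by blast
    show ?L
    proof (cases "s!i")
      case True
      define d where "d = vec (LL r) (int (NN r) - off r i - al c) (int (NN r) + off r i - be c) (\<lambda>j. 2 * e (gi s c) j) (-1)"
      have "d \<in> T2 r" unfolding d_def T2_def
        by (rule image_eqI[where x="(s,c,i)"]) (use assms i True in auto)
      then have dD: "d \<in> DD r \<delta>" by (simp add: DD_def)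
      have v: "vsub ?x d = cellp r (X r i c A) (Y r i c B)"
        by (simp add: gatep_def cellp_def d_def X_def Y_def)
      show ?L
        by (rule exI[of _ d]) (use dD v R True in \<open>auto simp: legal_vec gatep_def cellp_def\<close>)
    next
      case False
      define d where "d = vec (LL r) 0 0 (\<lambda>j. 2 * e (gi s c) j - e (ni r i c) j) 0"
      have "d \<in> T3 r" unfolding d_def T3_def
        by (rule image_eqI[where x="(s,c,i)"]) (use assms i False in auto)
      then have dD: "d \<in> DD r \<delta>" by (simp add: DD_def)
      have v: "vsub ?x d = negp r (ni r i c) A B"
        by (simp add: gatep_def negp_def d_def)
      show ?L
        by (rule exI[of _ d]) (use dD v R False assms in \<open>auto simp: legal_vec gatep_def negp_def\<close>)
    qed
  qed
  then show ?thesis by (subst game_value_eq) simp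
qed


lemma upto_eq: "[- int r..int r] = map (\<lambda>i. int i - int r) [0..<2*r+1]"
proof (rule nth_equalityI)
  show "length [- int r..int r] = length (map (\<lambda>i. int i - int r) [0..<2*r+1])" by simp
  fix k assume "k < length [- int r..int r]"
  then have "k < 2*r+1" by simp
  then show "[- int r..int r] ! k = map (\<lambda>i. int i - int r) [0..<2*r+1] ! k"
    by (subst nth_upto) (auto simp del: upt_Suc)
qed

lemma ca_Suc: "ca_config r \<delta> (Suc t) u = \<delta> (map (\<lambda>i. ca_config r \<delta> t (u + off r i)) [0..<2*r+1])"
  by (simp add: ca_config_def ca_step_def upto_eq off_def comp_def)

lemma blank:
  assumes hb: "\<delta> (replicate (2 * r + 1) True) = True"
  shows "int r * int t < \<bar>u\<bar> \<Longrightarrow> ca_config r \<delta> t u"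
proof (induction t arbitrary: u)
  case 0 then show ?case by (simp add: ca_config_def)
next
  case (Suc t)
  have "map (\<lambda>i. ca_config r \<delta> t (u + off r i)) [0..<2*r+1] = map (\<lambda>_. True) [0..<2*r+1]"
  proof (rule map_cong[OF refl])
    fix i assume "i \<in> set [0..<2*r+1]"
    then have "\<bar>off r i\<bar> \<le> int r" by (auto simp: off_def)
    moreover have "int r * int (Suc t) = int r * int t + int r" by (simp add: algebra_simps)
    ultimately have "int r * int t < \<bar>u + off r i\<bar>" using Suc.prems by linarith
    then show "ca_config r \<delta> t (u + off r i) = True" using Suc.IH by simp
  qed
  then show ?case using hb by (simp add: ca_Suc map_replicate_const)
qed


lemma gv_le1: "game_value D x \<le> 1"
  by (subst game_value_eq) simp

lemma main:
  assumes hb: "\<delta> (replicate (2 * r + 1) True) = True"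
  shows "\<bar>u\<bar> \<le> int (NN r) * int t \<Longrightarrow>
    game_value (DD r \<delta>) (cellp r (int (NN r) * int t + u) (int (NN r) * int t - u)) = of_bool (ca_config r \<delta> t u)"
proof (induction t arbitrary: u)
  case 0
  then have "u = 0" by simp
  then show ?case
    by (subst cell_val) (auto simp: ca_config_def al_def be_def)
next
  case (Suc t)
  let ?G = "game_value (DD r \<delta>)"
  define N where "N = int (NN r)"
  have Nr: "int r + 2 \<le> N" using NN_ge[of r] by (simp add: N_def)
  define P where "P = N * int (Suc t) + u"
  define Q where "Q = N * int (Suc t) - u"
  have P0: "0 \<le> P" and Q0: "0 \<le> Q" using Suc.prems by (auto simp: P_def Q_def N_def)
  define nb where "nb = map (\<lambda>i. ca_config r \<delta> t (u + off r i)) [0..<2*r+1]"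
  have z: "(0 \<le> N * int t + u + off r i \<and> 0 \<le> N * int t - u - off r i \<and>
      ?G (cellp r (N * int t + u + off r i) (N * int t - u - off r i)) = 0) \<longleftrightarrow> \<not> ca_config r \<delta> t (u + off r i)"
    if i: "i < 2*r+1" for i
  proof (cases "\<bar>u + off r i\<bar> \<le> N * int t")
    case True
    with Suc.IH[of "u + off r i"] show ?thesis
      by (simp add: N_def algebra_simps) (smt (verit))
  next
    case False
    have "int r * int t \<le> N * int t" using Nr by (intro mult_right_mono) auto
    then have "ca_config r \<delta> t (u + off r i)" using False by (intro blank[of \<delta> r, OF hb]) simp
    then show ?thesis using False by auto
  qed
  have gate: "?G (gatep r (gi s c) (P - al c) (Q - be c)) = 0 \<longleftrightarrow> s = nb"
    if s: "length s = 2*r+1" and c: "al c \<le> P" "be c \<le> Q" for s c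
  proof -
    have XY: "X r i c (P - al c) = N * int t + u + off r i" "Y r i c (Q - be c) = N * int t - u - off r i" for i
      by (simp_all add: X_def Y_def P_def Q_def N_def algebra_simps)
    have neg: "?G (negp r (ni r i c) (P - al c) (Q - be c)) = 0 \<longleftrightarrow> ca_config r \<delta> t (u + off r i)"
      if i: "i < 2*r+1" for i
      using z[OF i] by (subst neg_val) (use i c in \<open>auto simp: XY\<close>)
    have "?G (gatep r (gi s c) (P - al c) (Q - be c)) = 0 \<longleftrightarrow>
      \<not> (\<exists>i<2*r+1. (s!i \<and> \<not> ca_config r \<delta> t (u + off r i)) \<or> (\<not> s!i \<and> ca_config r \<delta> t (u + off r i)))"
    proof -
      have inner: "((s!i \<and> 0 \<le> X r i c (P - al c) \<and> 0 \<le> Y r i c (Q - be c) \<and>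
           ?G (cellp r (X r i c (P - al c)) (Y r i c (Q - be c))) = 0)
         \<or> (\<not> s!i \<and> ?G (negp r (ni r i c) (P - al c) (Q - be c)) = 0)) \<longleftrightarrow>
         ((s!i \<and> \<not> ca_config r \<delta> t (u + off r i)) \<or> (\<not> s!i \<and> ca_config r \<delta> t (u + off r i)))"
        if i: "i < 2*r+1" for i
        unfolding XY using z[OF i] neg[OF i] by blast
      have "0 \<le> P - al c" "0 \<le> Q - be c" using c by auto
      then have "?G (gatep r (gi s c) (P - al c) (Q - be c)) = (if \<exists>i<2*r+1. (s!i \<and> \<not> ca_config r \<delta> t (u + off r i)) \<or> (\<not> s!i \<and> ca_config r \<delta> t (u + off r i)) then 1 else 0)"
        apply (subst gate_val[OF s])
          apply assumption+
        apply (rule if_cong)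
          apply (use inner in blast)
        by auto
      then show ?thesis by simp
    qed
    also have "\<dots> \<longleftrightarrow> (\<forall>i<2*r+1. s!i = ca_config r \<delta> t (u + off r i))" by blast
    also have "\<dots> \<longleftrightarrow> s = nb"
      using s by (auto simp del: upt_Suc simp: nb_def intro!: nth_equalityI)
    finally show ?thesis .
  qed
  have ex: "\<exists>c. al c \<le> P \<and> be c \<le> Q"
  proof -
    have "P + Q = 2 * N * int (Suc t)" by (simp add: P_def Q_def)
    moreover have "2 * N \<le> 2 * N * int (Suc t)" using Nr by simp
    ultimately have "2 \<le> P \<or> 2 \<le> Q" using Nr by linarith
    then show ?thesis using P0 Q0 by (metis al_def be_def)
  qed
  have "?G (cellp r P Q) = of_bool (\<delta> nb)"
  proof -
    have ln: "length nb = 2*r+1" by (simp add: nb_def)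
    have "(\<exists>s c. length s = 2*r+1 \<and> \<delta> s \<and> al c \<le> P \<and> be c \<le> Q \<and>
       ?G (gatep r (gi s c) (P - al c) (Q - be c)) = 0) \<longleftrightarrow> \<delta> nb"
    proof
      assume "\<exists>s c. length s = 2*r+1 \<and> \<delta> s \<and> al c \<le> P \<and> be c \<le> Q \<and>
       ?G (gatep r (gi s c) (P - al c) (Q - be c)) = 0"
      then show "\<delta> nb" using gate by blast
    next
      assume "\<delta> nb"
      moreover obtain c where "al c \<le> P" "be c \<le> Q" using ex by blast
      ultimately show "\<exists>s c. length s = 2*r+1 \<and> \<delta> s \<and> al c \<le> P \<and> be c \<le> Q \<and>
       ?G (gatep r (gi s c) (P - al c) (Q - be c)) = 0" using gate[OF ln] ln by blast
    qed
    then show ?thesis by (subst cell_val[OF P0 Q0]) simp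
  qed
  then show ?case by (simp add: ca_Suc nb_def P_def Q_def N_def)
qed


theorem corollary1:
  fixes r :: nat and \<delta> :: "bool list \<Rightarrow> bool"
  assumes "\<delta> (replicate (2 * r + 1) True) = True"
  shows "\<exists>N::nat. 1 \<le> N \<and>
    (\<exists>D :: int list set. finite D \<and>
       (\<forall>d\<in>D. length d = 2 * N + 2 \<and> 0 < sum_list d) \<and>
       (\<forall>(t::nat) (u::int). \<bar>u\<bar> \<le> int N * int t \<longrightarrow>
          of_bool (ca_config r \<delta> t u) =
          game_value D ([int N * int t + u, int N * int t - u] @ replicate (2 * N - 1) 0 @ [1])))"
proof (intro exI conjI allI impI)
  show "1 \<le> NN r" by (simp add: NN_def)
  show "finite (DD r \<delta>)" by (rule finite_DD)
  show "\<forall>d\<in>DD r \<delta>. length d = 2 * NN r + 2 \<and> 0 < sum_list d"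
    using sum_pos length_DD by (fastforce simp: LL_def NN_def)
  fix t :: nat and u :: int
  assume h: "\<bar>u\<bar> \<le> int (NN r) * int t"
  have "[int (NN r) * int t + u, int (NN r) * int t - u] @ replicate (2 * NN r - 1) 0 @ [1]
      = cellp r (int (NN r) * int t + u) (int (NN r) * int t - u)"
    by (simp add: cellp_def vec_def LL_def map_replicate_const)
  then show "of_bool (ca_config r \<delta> t u) =
          game_value (DD r \<delta>) ([int (NN r) * int t + u, int (NN r) * int t - u] @ replicate (2 * NN r - 1) 0 @ [1])"
    using main[of \<delta> r u t, OF assms h] by simp
qed

end
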